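(* Fix a function $b:\mathbb{R}^d\to\mathbb{R}^+$, and for $u\in\mathbb{R}^d$ define $a_u:\mathbb{R}^d\to\mathbb{R}$ by $a_u(x)=b(u)\cdot(u\cdot x)$. The pseudo-dimension of $\{a_u: u\in B(1)\}$ is $O(d)$.
   Context: $B(1)=\{u\in\mathbb{R}^d:\|u\|_2\le1\}$. For a set $A$ of real-valued functions on a common domain $X$, its pseudo-dimension is the VC-dimension of the set of indicator functions $\{(x,y)\mapsto \mathbf{1}[a(x)\ge y]: a\in A\}$ on $X\times\mathbb{R}$. *)

theory Defs
  imports Complex_Main "HOL-Library.Extended_Nat"
begin

text \<open>R^d, with d varying inside the statement, is represented by functions
  nat => real vanishing at all indices >= d.\<close>
definition Rd :: "nat \<Rightarrow> (nat \<Rightarrow> real) set" where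
  "Rd d = {x. \<forall>i\<ge>d. x i = 0}"

definition dotd :: "nat \<Rightarrow> (nat \<Rightarrow> real) \<Rightarrow> (nat \<Rightarrow> real) \<Rightarrow> real" where
  "dotd d u x = (\<Sum>i<d. u i * x i)"

definition unit_ball_d :: "nat \<Rightarrow> (nat \<Rightarrow> real) set" where
  "unit_ball_d d = {u \<in> Rd d. sqrt (\<Sum>i<d. (u i)\<^sup>2) \<le> 1}"

definition shatters :: "('a \<Rightarrow> bool) set \<Rightarrow> 'a set \<Rightarrow> bool" where
  "shatters H S \<longleftrightarrow> (\<forall>T\<subseteq>S. \<exists>h\<in>H. \<forall>z\<in>S. h z \<longleftrightarrow> z \<in> T)"

definition VC_dim :: "'a set \<Rightarrow> ('a \<Rightarrow> bool) set \<Rightarrow> enat" where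
  "VC_dim Z H = Sup {enat (card S) | S. finite S \<and> S \<subseteq> Z \<and> shatters H S}"

definition pseudo_dim :: "'a set \<Rightarrow> ('a \<Rightarrow> real) set \<Rightarrow> enat" where
  "pseudo_dim X A = VC_dim (X \<times> (UNIV :: real set)) ((\<lambda>a. \<lambda>(x, y). a x \<ge> y) ` A)"

end

theory Submission imports Defs "HOL-Library.Function_Algebras" begin

definition fsc :: "real \<Rightarrow> (nat \<Rightarrow> real) \<Rightarrow> (nat \<Rightarrow> real)" where
  "fsc c f = (\<lambda>i. c * f i)"

lemma vs_fsc: "vector_space fsc"
  by unfold_locales (auto simp: fsc_def plus_fun_def algebra_simps)

lemma sum_fun_apply: "(\<Sum>a\<in>A. (f a :: nat \<Rightarrow> real)) i = (\<Sum>a\<in>A. f a i)"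
  by (induction A rule: infinite_finite_induct) (auto simp: plus_fun_def zero_fun_def)

lemma dep_big:
  fixes T :: "(nat \<Rightarrow> real) set"
  assumes fin: "finite T" and sub: "\<forall>v\<in>T. \<forall>i>d. v i = 0" and card: "card T > d + 1"
  shows "\<exists>t u. finite t \<and> t \<subseteq> T \<and> (\<forall>i. (\<Sum>v\<in>t. u v * v i) = 0) \<and> (\<exists>v\<in>t. u v \<noteq> 0)"
proof -
  interpret V: vector_space fsc by (rule vs_fsc)
  define e where "e = (\<lambda>k::nat. \<lambda>j::nat. if j = k then (1::real) else 0)"
  define B where "B = e ` {..d}"
  have finB: "finite B" unfolding B_def by simp
  have cB: "card B \<le> d + 1" unfolding B_def using card_image_le[of "{..d}" e] by simp
  have "T \<subseteq> V.span B"
  proof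
    fix v assume v: "v \<in> T"
    have "v = (\<Sum>k\<in>{..d}. fsc (v k) (e k))"
    proof
      fix i
      show "v i = (\<Sum>k\<in>{..d}. fsc (v k) (e k)) i"
      proof (cases "i \<le> d")
        case True
        have "(\<Sum>a\<le>d. v a * (if i = a then 1 else 0)) = (\<Sum>a\<le>d. if a = i then v a else 0)"
          by (intro sum.cong) auto
        also have "\<dots> = v i" using True by (simp add: sum.delta)
        finally show ?thesis by (simp add: sum_fun_apply fsc_def e_def)
      qed (use v sub in \<open>auto simp: sum_fun_apply fsc_def e_def not_le\<close>)
    qed
    also have "\<dots> \<in> V.span B"
      by (intro V.span_sum V.span_scale V.span_base) (auto simp: B_def)
    finally show "v \<in> V.span B" .
  qed
  note sp = this
  have "V.dependent T"
  proof (rule ccontr)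
    assume "\<not> V.dependent T"
    hence "card T \<le> card B" using V.independent_span_bound[OF finB _ sp] by blast
    thus False using card cB by linarith
  qed
  then obtain t u where "finite t" "t \<subseteq> T" and eq: "(\<Sum>v\<in>t. fsc (u v) v) = 0" and "\<exists>v\<in>t. u v \<noteq> 0"
    unfolding V.dependent_explicit by blast
  moreover have "\<forall>i. (\<Sum>v\<in>t. u v * v i) = 0"
  proof
    fix i
    have "(\<Sum>v\<in>t. fsc (u v) v) i = 0" using eq by (simp add: zero_fun_def)
    thus "(\<Sum>v\<in>t. u v * v i) = 0" by (simp add: sum_fun_apply fsc_def)
  qed
  ultimately show ?thesis by blast
qed

lemma card_bound:
  fixes S :: "((nat \<Rightarrow> real) \<times> real) set"
  assumes fin: "finite S" and SR: "S \<subseteq> Rd d \<times> UNIV" and sh: "shatters H S"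
    and HL: "\<forall>h\<in>H. \<exists>w. h = (\<lambda>(x, y). y \<le> dotd d w x)"
  shows "card S \<le> d + 1"
proof (rule ccontr)
  assume "\<not> card S \<le> d + 1"
  hence cS: "card S > d + 1" by simp
  define z where "z = (\<lambda>s::(nat \<Rightarrow> real) \<times> real. \<lambda>i. if i < d then fst s i else if i = d then snd s else 0)"
  define L where "L = (\<lambda>(w::nat \<Rightarrow> real) (v::nat \<Rightarrow> real). (\<Sum>i<d. w i * v i) - v d)"
  have inj: "inj_on z S"
  proof
    fix s s' assume s: "s \<in> S" and s': "s' \<in> S" and eq: "z s = z s'"
    have "fst s = fst s'"
    proof
      fix i
      show "fst s i = fst s' i"
      proof (cases "i < d")
        case True thus ?thesis using fun_cong[OF eq, of i] by (simp add: z_def)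
      next
        case False
        have "fst s \<in> Rd d" "fst s' \<in> Rd d" using s s' SR by auto
        thus ?thesis using False by (simp add: Rd_def not_less)
      qed
    qed
    moreover have "snd s = snd s'" using fun_cong[OF eq, of d] by (simp add: z_def)
    ultimately show "s = s'" by (simp add: prod_eq_iff)
  qed
  have "\<exists>t u. finite t \<and> t \<subseteq> z ` S \<and> (\<forall>i. (\<Sum>v\<in>t. u v * v i) = 0) \<and> (\<exists>v\<in>t. u v \<noteq> 0)"
    by (rule dep_big) (use fin cS inj in \<open>auto simp: z_def card_image\<close>)
  then obtain t u where ft: "finite t" and tS: "t \<subseteq> z ` S" and rel: "\<forall>i. (\<Sum>v\<in>t. u v * v i) = 0"
    and nz: "\<exists>v\<in>t. u v \<noteq> 0" by blast
  have sumL: "(\<Sum>v\<in>t. u v * L w v) = 0" for w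
  proof -
    have "(\<Sum>v\<in>t. u v * L w v) = (\<Sum>v\<in>t. (\<Sum>i<d. u v * (w i * v i))) - (\<Sum>v\<in>t. u v * v d)"
      unfolding L_def by (simp only: right_diff_distrib sum_subtractf sum_distrib_left)
    also have "(\<Sum>v\<in>t. (\<Sum>i<d. u v * (w i * v i))) = (\<Sum>i<d. (\<Sum>v\<in>t. u v * (w i * v i)))"
      by (rule sum.swap)
    also have "\<dots> = (\<Sum>i<d. w i * (\<Sum>v\<in>t. u v * v i))"
      by (simp only: sum_distrib_left mult.left_commute)
    finally show ?thesis using rel by simp
  qed
  have Lz: "L w (z s) = dotd d w (fst s) - snd s" for w s
  proof -
    have "(\<Sum>i<d. w i * z s i) = (\<Sum>i<d. w i * fst s i)"
      by (intro sum.cong) (auto simp: z_def)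
    moreover have "z s d = snd s" by (simp add: z_def)
    ultimately show ?thesis unfolding L_def dotd_def by simp
  qed
  have key: "\<exists>w. \<forall>s\<in>S. (0 \<le> L w (z s)) = (s \<in> T')" if T'S: "T' \<subseteq> S" for T'
  proof -
    from sh T'S obtain h where "h \<in> H" and hS: "\<forall>s\<in>S. h s = (s \<in> T')"
      unfolding shatters_def by blast
    then obtain w where hw: "h = (\<lambda>(x, y). y \<le> dotd d w x)" using HL by blast
    have "(0 \<le> L w (z s)) = (s \<in> T')" if "s \<in> S" for s
    proof -
      have "(0 \<le> L w (z s)) = (snd s \<le> dotd d w (fst s))" unfolding Lz by linarith
      also have "\<dots> = h s" unfolding hw by (simp add: case_prod_beta)
      also have "\<dots> = (s \<in> T')" using hS that by blast
      finally show ?thesis .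
    qed
    thus ?thesis by blast
  qed
  have tz: "\<exists>s\<in>S. v = z s" if "v \<in> t" for v using tS that by blast
  show False
  proof (cases "\<exists>v\<in>t. u v < 0")
    case True
    then obtain v0 where v0: "v0 \<in> t" "u v0 < 0" by blast
    obtain w where w: "\<forall>s\<in>S. (0 \<le> L w (z s)) = (s \<in> {s\<in>S. u (z s) > 0})"
      using key[of "{s\<in>S. u (z s) > 0}"] by blast
    have w': "(0 \<le> L w v) = (u v > 0)" if vt: "v \<in> t" for v
    proof -
      obtain s where "s \<in> S" "v = z s" using tz[OF vt] by blast
      thus ?thesis using w by simp
    qed
    have "0 < (\<Sum>v\<in>t. u v * L w v)"
    proof (rule sum_pos2[OF ft v0(1)])
      have "L w v0 < 0" using w'[OF v0(1)] v0(2) by linarith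
      thus "0 < u v0 * L w v0" using v0(2) by (simp add: mult_neg_neg)
      show "0 \<le> u v * L w v" if "v \<in> t" for v
      proof (cases "u v > 0")
        case True
        hence "0 \<le> L w v" using w'[OF that] by blast
        thus ?thesis using True by simp
      next
        case False
        hence "L w v < 0" using w'[OF that] by linarith
        thus ?thesis using False by (simp add: mult_nonpos_nonpos)
      qed
    qed
    thus False using sumL by simp
  next
    case False
    then obtain v0 where v0: "v0 \<in> t" "u v0 > 0" using nz by force
    obtain w where w: "\<forall>s\<in>S. (0 \<le> L w (z s)) = (s \<in> {})"
      using key[of "{}"] by blast
    have w': "L w v < 0" if vt: "v \<in> t" for v
    proof -
      obtain s where "s \<in> S" "v = z s" using tz[OF vt] by blast
      thus ?thesis using w by force
    qed
    have "0 < (\<Sum>v\<in>t. u v * (- L w v))"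
    proof (rule sum_pos2[OF ft v0(1)])
      show "0 < u v0 * (- L w v0)" using w'[OF v0(1)] v0(2) by (simp add: mult_pos_neg)
      show "0 \<le> u v * (- L w v)" if "v \<in> t" for v
        using w'[OF that] False that by (simp add: not_less mult_nonneg_nonpos)
    qed
    hence "(\<Sum>v\<in>t. u v * L w v) < 0" by (simp add: sum_negf)
    thus False using sumL by simp
  qed
qed

theorem lemma10:
  shows "\<exists>C::nat. \<forall>d::nat. d \<ge> 1 \<longrightarrow>
    (\<forall>b :: (nat \<Rightarrow> real) \<Rightarrow> real. (\<forall>u\<in>Rd d. b u > 0) \<longrightarrow>
      pseudo_dim (Rd d) ((\<lambda>u. \<lambda>x. b u * dotd d u x) ` unit_ball_d d) \<le> enat (C * d))"
proof (intro exI[of _ 2] allI impI)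
  fix d :: nat and b :: "(nat \<Rightarrow> real) \<Rightarrow> real"
  assume d: "d \<ge> 1"
  let ?H = "(\<lambda>a. \<lambda>(x, y). a x \<ge> y) ` ((\<lambda>u. \<lambda>x. b u * dotd d u x) ` unit_ball_d d)"
  have HL: "\<forall>h\<in>?H. \<exists>w. h = (\<lambda>(x, y). y \<le> dotd d w x)"
  proof
    fix h assume "h \<in> ?H"
    then obtain u where hu: "h = (\<lambda>(x, y). y \<le> b u * dotd d u x)" by auto
    have "b u * dotd d u x = dotd d (\<lambda>i. b u * u i) x" for x
      unfolding dotd_def by (simp add: sum_distrib_left mult.assoc)
    thus "\<exists>w. h = (\<lambda>(x, y). y \<le> dotd d w x)" using hu by (intro exI[of _ "\<lambda>i. b u * u i"]) auto
  qed
  have "pseudo_dim (Rd d) ((\<lambda>u. \<lambda>x. b u * dotd d u x) ` unit_ball_d d) \<le> enat (d + 1)"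
    unfolding pseudo_dim_def VC_dim_def
  proof (rule Sup_least)
    fix k assume "k \<in> {enat (card S) | S. finite S \<and> S \<subseteq> Rd d \<times> UNIV \<and> shatters ?H S}"
    then obtain S where "k = enat (card S)" "finite S" "S \<subseteq> Rd d \<times> UNIV" "shatters ?H S" by blast
    thus "k \<le> enat (d + 1)" using card_bound[OF _ _ _ HL] by auto
  qed
  also have "\<dots> \<le> enat (2 * d)" using d by simp
  finally show "pseudo_dim (Rd d) ((\<lambda>u. \<lambda>x. b u * dotd d u x) ` unit_ball_d d) \<le> enat (2 * d)" .
qed

end
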